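(* Let $1\le p\le n-1$ and let $a\in R[t_1,\ldots,t_n]$ satisfy $s_p.a=a$. Then $T_pa=aT_p$ in $\mathcal H_{n,r}$.
   Context: Standing setup: $R$ is an integral domain, $n\ge 2$, $r\ge 1$, and $q,u_1,\ldots,u_r\in R$ with $q$ invertible in $R$ and $\Delta:=\prod_{1\le j<i\le r}(u_i-u_j)$ invertible in $R$. For $1\le c\le r$ let $F_c(X)\in R[X]$ be the unique polynomial of degree $\le r-1$ with $F_c(u_{c'})=\delta_{c,c'}\Delta$ for all $1\le c'\le r$. The modified Ariki–Koike (Shoji) algebra $\mathcal H_{n,r}=\mathcal H_{n,r}(R,q,u_1,\ldots,u_r)$ is the associative $R$-algebra generated by $t_1,\ldots,t_n,T_1,\ldots,T_{n-1}$ subject to: $(T_i-q)(T_i+q^{-1})=0$; $(t_i-u_1)\cdots(t_i-u_r)=0$; $T_iT_{i+1}T_i=T_{i+1}T_iT_{i+1}$; $T_iT_j=T_jT_i$ for $|i-j|\ge2$; $t_it_j=t_jt_i$; $T_jt_k=t_kT_j$ for $k\ne j,j+1$; and for $2\le j\le n$: $T_{j-1}t_j=t_{j-1}T_{j-1}+\Delta^{-2}\sum_{1\le c_1<c_2\le r}(u_{c_2}-u_{c_1})(q-q^{-1})F_{c_1}(t_{j-1})F_{c_2}(t_j)$ and $T_{j-1}t_{j-1}=t_jT_{j-1}-\Delta^{-2}\sum_{1\le c_1<c_2\le r}(u_{c_2}-u_{c_1})(q-q^{-1})F_{c_1}(t_{j-1})F_{c_2}(t_j)$. $R[t_1,\ldots,t_n]$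 is the (commutative) subalgebra generated by the $t_i$; it is isomorphic to $R[X_1,\ldots,X_n]/(\prod_{j=1}^r(X_i-u_j):1\le i\le n)$, and the symmetric group $\mathfrak S(n)$ acts on it by $R$-algebra automorphisms via $w.t_i=t_{w(i)}$. $s_p\in\mathfrak S(n)$ is the simple transposition $(p\ p+1)$. *)

theory Defs
  imports "HOL-Computational_Algebra.Polynomial"
begin

definition unit_inv :: "'r::comm_ring_1 \<Rightarrow> 'r" where
  "unit_inv x = (THE y. x * y = 1)"

definition Delta :: "nat \<Rightarrow> (nat \<Rightarrow> 'r::comm_ring_1) \<Rightarrow> 'r" where
  "Delta r u = (\<Prod>i\<in>{1..r}. \<Prod>j\<in>{1..<i}. (u i - u j))"

definition Fpol :: "nat \<Rightarrow> (nat \<Rightarrow> 'r::idom) \<Rightarrow> nat \<Rightarrow> 'r poly" where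
  "Fpol r u c = (THE f. degree f \<le> r - 1 \<and>
      (\<forall>c'\<in>{1..r}. poly f (u c') = (if c = c' then Delta r u else 0)))"

text \<open>R-algebra structure on a (noncommutative) ring: a ring homomorphism with central image.\<close>
definition central_hom :: "('r::comm_ring_1 \<Rightarrow> 'a::ring_1) \<Rightarrow> bool" where
  "central_hom \<phi> \<longleftrightarrow> \<phi> 0 = 0 \<and> \<phi> 1 = 1 \<and> (\<forall>x y. \<phi> (x + y) = \<phi> x + \<phi> y)
     \<and> (\<forall>x y. \<phi> (x * y) = \<phi> x * \<phi> y) \<and> (\<forall>x y. \<phi> x * y = y * \<phi> x)"

definition peval :: "('r::comm_ring_1 \<Rightarrow> 'a::ring_1) \<Rightarrow> 'r poly \<Rightarrow> 'a \<Rightarrow> 'a" where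
  "peval \<phi> f x = (\<Sum>k\<le>degree f. \<phi> (coeff f k) * x ^ k)"

definition corr :: "('r::idom \<Rightarrow> 'a::ring_1) \<Rightarrow> nat \<Rightarrow> 'r \<Rightarrow> (nat \<Rightarrow> 'r)
    \<Rightarrow> (nat \<Rightarrow> 'a) \<Rightarrow> nat \<Rightarrow> 'a" where
  "corr \<phi> r q u t j = (\<Sum>c1\<in>{1..r}. \<Sum>c2\<in>{c1<..r}.
      \<phi> ((unit_inv (Delta r u))^2 * (u c2 - u c1) * (q - unit_inv q))
      * peval \<phi> (Fpol r u c1) (t (j - 1)) * peval \<phi> (Fpol r u c2) (t j))"

text \<open>Elements \<phi>, t_1..t_n, T_1..T_(n-1) of an R-algebra satisfying the defining
  relations of the modified Ariki-Koike (Shoji) algebra H_{n,r}(R,q,u_1..u_r).\<close>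
definition shoji_rels :: "nat \<Rightarrow> nat \<Rightarrow> 'r::idom \<Rightarrow> (nat \<Rightarrow> 'r)
    \<Rightarrow> ('r \<Rightarrow> 'a::ring_1) \<Rightarrow> (nat \<Rightarrow> 'a) \<Rightarrow> (nat \<Rightarrow> 'a) \<Rightarrow> bool" where
  "shoji_rels n r q u \<phi> t T \<longleftrightarrow>
     central_hom \<phi>
   \<and> (\<forall>i\<in>{1..<n}. (T i - \<phi> q) * (T i + \<phi> (unit_inv q)) = 0)
   \<and> (\<forall>i\<in>{1..n}. foldr (\<lambda>c acc. (t i - \<phi> (u c)) * acc) [1..<r+1] 1 = 0)
   \<and> (\<forall>i\<in>{1..<n-1}. T i * T (i+1) * T i = T (i+1) * T i * T (i+1))
   \<and> (\<forall>i\<in>{1..<n}. \<forall>j\<in>{1..<n}. (i + 2 \<le> j \<or> j + 2 \<le> i) \<longrightarrow> T i * T j = T j * T i)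
   \<and> (\<forall>i\<in>{1..n}. \<forall>j\<in>{1..n}. t i * t j = t j * t i)
   \<and> (\<forall>j\<in>{1..<n}. \<forall>k\<in>{1..n}. k \<noteq> j \<and> k \<noteq> j + 1 \<longrightarrow> T j * t k = t k * T j)
   \<and> (\<forall>j\<in>{2..n}. T (j-1) * t j = t (j-1) * T (j-1) + corr \<phi> r q u t j)
   \<and> (\<forall>j\<in>{2..n}. T (j-1) * t (j-1) = t j * T (j-1) - corr \<phi> r q u t j)"

text \<open>Reduced exponent vectors (indices 1..n, exponents < r): the monomials
  t^alpha with alpha in this set form an R-basis of R[t_1..t_n].\<close>
definition red_exps :: "nat \<Rightarrow> nat \<Rightarrow> (nat \<Rightarrow> nat) set" where
  "red_exps n r = {\<alpha>. (\<forall>i\<in>{1..n}. \<alpha> i < r) \<and> (\<forall>i. i \<notin> {1..n} \<longrightarrow> \<alpha> i = 0)}"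

definition monom_t :: "nat \<Rightarrow> (nat \<Rightarrow> 'a::ring_1) \<Rightarrow> (nat \<Rightarrow> nat) \<Rightarrow> 'a" where
  "monom_t n t \<alpha> = foldr (\<lambda>i acc. t i ^ \<alpha> i * acc) [1..<n+1] 1"

definition elem_t :: "nat \<Rightarrow> nat \<Rightarrow> ('r::comm_ring_1 \<Rightarrow> 'a::ring_1) \<Rightarrow> (nat \<Rightarrow> 'a)
    \<Rightarrow> ((nat \<Rightarrow> nat) \<Rightarrow> 'r) \<Rightarrow> 'a" where
  "elem_t n r \<phi> t c = (\<Sum>\<alpha>\<in>red_exps n r. \<phi> (c \<alpha>) * monom_t n t \<alpha>)"

text \<open>Action of s_p on exponent vectors: s_p.(t^alpha) = t^(alpha o s_p).\<close>
definition swap_exp :: "nat \<Rightarrow> (nat \<Rightarrow> nat) \<Rightarrow> (nat \<Rightarrow> nat)" where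
  "swap_exp p \<alpha> = \<alpha>(p := \<alpha> (p + 1), p + 1 := \<alpha> p)"

end

theory Submission imports Defs begin

lemma comm_pow: "(a::'a::ring_1)*b = b*a \<Longrightarrow> a^m * b = b * a^m"
proof (induction m)
  case (Suc m)
  have "a^Suc m * b = a*(a^m*b)" by (simp add: mult.assoc)
  also have "\<dots> = a*(b*a^m)" using Suc by simp
  also have "\<dots> = (a*b)*a^m" by (simp add: mult.assoc)
  also have "\<dots> = b * a^Suc m" using Suc.prems by (simp add: mult.assoc)
  finally show ?case .
qed simp

lemma comm_pow2: assumes "(a::'a::ring_1)*b = b*a" shows "a^m * b^k = b^k * a^m"
  using comm_pow[OF comm_pow[OF assms(1), of m, symmetric], of k] by simp

lemma comm_sum: "(\<And>x. x\<in>A \<Longrightarrow> (a::'a::ring_1) * f x = f x * a) \<Longrightarrow> a * sum f A = sum f A * a"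
  by (simp add: sum_distrib_left sum_distrib_right)

lemma comm_mult: "(a::'a::ring_1)*b=b*a \<Longrightarrow> a*c=c*a \<Longrightarrow> a*(b*c) = (b*c)*a"
proof -
  assume h: "a*b=b*a" "a*c=c*a"
  have "a*(b*c) = (a*b)*c" by (simp add: mult.assoc)
  also have "\<dots> = b*(a*c)" using h by (simp add: mult.assoc)
  also have "\<dots> = (b*c)*a" using h by (simp add: mult.assoc)
  finally show ?thesis .
qed

lemma comm_add: "(a::'a::ring_1)*b=b*a \<Longrightarrow> a*c=c*a \<Longrightarrow> a*(b+c) = (b+c)*a"
  by (simp add: distrib_left distrib_right)

lemma comm_diff: "(a::'a::ring_1)*b=b*a \<Longrightarrow> a*c=c*a \<Longrightarrow> a*(b-c) = (b-c)*a"
  by (simp add: left_diff_distrib right_diff_distrib)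

lemma comm_powr: assumes "(a::'a::ring_1)*b=b*a" shows "a*b^m = b^m*a"
  using comm_pow[OF assms(1)[symmetric]] by simp

lemma mult_pow_distrib: "(a::'a::ring_1)*b = b*a \<Longrightarrow> (a*b)^i = a^i*b^i"
proof (induction i)
  case (Suc i)
  have "(a*b)^Suc i = a*b*(a^i*b^i)" using Suc by simp
  also have "\<dots> = a*(b*a^i)*b^i" by (simp add: mult.assoc)
  also have "\<dots> = a*(a^i*b)*b^i" using comm_pow[OF Suc.prems, of i] by simp
  also have "\<dots> = a^Suc i * b^Suc i" by (simp add: mult.assoc)
  finally show ?case .
qed simp

lemma peval_comm:
  assumes "\<forall>x y. \<phi> x * y = y * \<phi> x" "a*z = z*(a::'a::ring_1)"
  shows "a * peval \<phi> f z = peval \<phi> f z * a"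
  unfolding peval_def
  by (rule comm_sum, rule comm_mult) (use assms in \<open>auto intro: comm_powr\<close>)

lemma foldr_cong_loc:
  "(\<And>i. i \<in> set xs \<Longrightarrow> \<alpha> i = \<beta> i) \<Longrightarrow>
   foldr (\<lambda>i acc. t i ^ \<alpha> i * acc) xs 1 = foldr (\<lambda>i acc. t i ^ \<beta> i * acc) xs (1::'a::ring_1)"
  by (induction xs) auto

lemma foldr_extract:
  fixes t :: "nat \<Rightarrow> 'a::ring_1"
  assumes "distinct xs" "k \<in> set xs" "\<forall>i\<in>set xs. \<forall>j\<in>set xs. t i * t j = t j * t i"
  shows "foldr (\<lambda>i acc. t i ^ \<alpha> i * acc) xs 1 = t k ^ \<alpha> k * foldr (\<lambda>i acc. t i ^ (\<alpha>(k:=0)) i * acc) xs 1"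
  using assms
proof (induction xs)
  case (Cons a xs)
  show ?case
  proof (cases "a = k")
    case True
    then have "k \<notin> set xs" using Cons by auto
    then have "foldr (\<lambda>i acc. t i ^ \<alpha> i * acc) xs 1 = foldr (\<lambda>i acc. t i ^ (\<alpha>(k:=0)) i * acc) xs 1"
      by (intro foldr_cong_loc) auto
    then show ?thesis using True by simp
  next
    case False
    then have k: "k \<in> set xs" using Cons by auto
    have IH: "foldr (\<lambda>i acc. t i ^ \<alpha> i * acc) xs 1 = t k ^ \<alpha> k * foldr (\<lambda>i acc. t i ^ (\<alpha>(k:=0)) i * acc) xs 1"
    proof (rule Cons.IH)
      show "distinct xs" using Cons.prems(1) by simp
      show "k \<in> set xs" by (rule k)
      show "\<forall>i\<in>set xs. \<forall>j\<in>set xs. t i * t j = t j * t i"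
        using Cons.prems(3) set_subset_Cons[of xs a] by blast
    qed
    have tak: "t a * t k = t k * t a" using Cons.prems(3) k by (meson list.set_intros)
    have c: "t a ^ \<alpha> a * t k ^ \<alpha> k = t k ^ \<alpha> k * t a ^ \<alpha> a"
      by (rule comm_pow2[OF tak])
    have "foldr (\<lambda>i acc. t i ^ \<alpha> i * acc) (a#xs) 1 = t a ^ \<alpha> a * (t k ^ \<alpha> k * foldr (\<lambda>i acc. t i ^ (\<alpha>(k:=0)) i * acc) xs 1)"
      by (simp add: IH)
    also have "\<dots> = t k ^ \<alpha> k * (t a ^ \<alpha> a * foldr (\<lambda>i acc. t i ^ (\<alpha>(k:=0)) i * acc) xs 1)"
      by (simp add: mult.assoc[symmetric] c)
    finally show ?thesis using False by simp
  qed
qed simp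

lemma foldr_commT:
  fixes t :: "nat \<Rightarrow> 'a::ring_1"
  assumes "\<forall>i\<in>set xs. \<beta> i \<noteq> 0 \<longrightarrow> T * t i = t i * T"
  shows "T * foldr (\<lambda>i acc. t i ^ \<beta> i * acc) xs 1 = foldr (\<lambda>i acc. t i ^ \<beta> i * acc) xs 1 * T"
  using assms
proof (induction xs)
  case (Cons a xs)
  have "T * t a ^ \<beta> a = t a ^ \<beta> a * T"
    using Cons.prems by (cases "\<beta> a = 0") (auto intro: comm_powr)
  then show ?case using Cons by (simp add: comm_mult)
qed simp


lemma commZ_core:
  fixes x y T C :: "'a::ring_1"
  assumes xy: "x*y = y*x" and R1: "T*y = x*T + C" and R2: "T*x = y*T - C" and yC: "y*C = C*y"
  shows "T*(x^i*y^j + x^j*y^i) = (x^i*y^j + x^j*y^i)*T" and "T*(x^i*y^i) = (x^i*y^i)*T"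
proof -
  have e1: "T*(x+y) = (x+y)*T" by (simp add: distrib_left distrib_right R1 R2)
  have "T*(x*y) = (y*T - C)*y" by (simp add: R2 mult.assoc[symmetric])
  also have "\<dots> = y*(x*T + C) - C*y" by (simp add: left_diff_distrib mult.assoc R1)
  also have "\<dots> = (x*y)*T" by (simp add: distrib_left yC mult.assoc[symmetric] xy)
  finally have e2: "T*(x*y) = (x*y)*T" .
  have e2p: "T*(x*y)^k = (x*y)^k*T" for k using e2 by (rule comm_powr)
  show eq: "T*(x^i*y^i) = (x^i*y^i)*T" for i using e2p[of i] mult_pow_distrib[OF xy] by simp
  define P where "P d = x^d + y^d" for d
  have rec: "P (Suc (Suc k)) = (x+y)*P (Suc k) - (x*y)*P k" for k
  proof -
    have a: "y*x^k = x^k*y" using comm_pow[OF xy, of k] by simp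
    have b: "y*(x*z) = x*(y*z)" for z by (simp add: mult.assoc[symmetric] xy)
    show ?thesis unfolding P_def
      by (simp add: distrib_left distrib_right mult.assoc a xy b)
  qed
  have "T*P k = P k*T \<and> T*P (Suc k) = P (Suc k)*T" for k
  proof (induction k)
    case 0
    have "T*2 = 2*T" by (simp add: mult_2 mult_2_right)
    then show ?case using e1 by (simp add: P_def)
  next
    case (Suc k)
    then show ?case unfolding rec by (intro conjI comm_diff comm_mult e1 e2) auto
  qed
  then have PZ: "T*P d = P d*T" for d by blast
  have le: "T*(x^i*y^j + x^j*y^i) = (x^i*y^j + x^j*y^i)*T" if "i \<le> j" for i j
  proof -
    define d where "d = j - i"
    have d: "j = i + d" using that unfolding d_def by simp
    have yx: "y^i * x^d = x^d * y^i" using comm_pow2[OF xy, of d i] by simp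
    have "x^i*y^j + x^j*y^i = (x^i*y^i)*P d"
      unfolding P_def d by (simp add: power_add distrib_left mult.assoc yx)
    then show ?thesis using comm_mult[OF eq[of i] PZ[of d]] by simp
  qed
  show "T*(x^i*y^j + x^j*y^i) = (x^i*y^j + x^j*y^i)*T"
  proof (cases "i \<le> j")
    case True then show ?thesis by (rule le)
  next
    case False then show ?thesis using le[of j i] by (simp only: add.commute not_le less_imp_le)
  qed
qed


theorem lemma2p6:
  fixes n r p :: nat and q :: "'r::idom" and u :: "nat \<Rightarrow> 'r"
    and c :: "(nat \<Rightarrow> nat) \<Rightarrow> 'r"
    and \<phi> :: "'r \<Rightarrow> 'a::ring_1" and t T :: "nat \<Rightarrow> 'a"
  assumes "n \<ge> 2" and "r \<ge> 1"
    and "q dvd 1" and "Delta r u dvd 1"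
    and "1 \<le> p" and "p \<le> n - 1"
    and "\<forall>\<alpha>\<in>red_exps n r. c (swap_exp p \<alpha>) = c \<alpha>"
    and "shoji_rels n r q u \<phi> t T"
  shows "T p * elem_t n r \<phi> t c = elem_t n r \<phi> t c * T p"
proof -
  note rels = assms(8)[unfolded shoji_rels_def central_hom_def]
  have cent: "\<forall>a b. \<phi> a * b = b * \<phi> a" using rels by (elim conjE) assumption
  have tc: "\<forall>i\<in>{1..n}. \<forall>j\<in>{1..n}. t i * t j = t j * t i" using rels by (elim conjE) assumption
  have Tt0: "\<forall>j\<in>{1..<n}. \<forall>k\<in>{1..n}. k \<noteq> j \<and> k \<noteq> j + 1 \<longrightarrow> T j * t k = t k * T j"
    using rels by (elim conjE) assumption
  have R10: "\<forall>j\<in>{2..n}. T (j-1) * t j = t (j-1) * T (j-1) + corr \<phi> r q u t j"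
    using rels by (elim conjE) assumption
  have R20: "\<forall>j\<in>{2..n}. T (j-1) * t (j-1) = t j * T (j-1) - corr \<phi> r q u t j"
    using rels by (elim conjE) assumption
  have pn: "p \<in> {1..n}" "p+1 \<in> {1..n}" "p \<in> {1..<n}" "Suc p \<in> {2..n}"
    using assms(1,5,6) by auto
  have Tt: "\<And>k. k\<in>{1..n} \<Longrightarrow> k \<noteq> p \<Longrightarrow> k \<noteq> p+1 \<Longrightarrow> T p * t k = t k * T p"
    using Tt0 pn(3) by blast
  define C where "C = corr \<phi> r q u t (Suc p)"
  define x where "x = t p"
  define y where "y = t (p+1)"
  have R1: "T p * y = x * T p + C" using R10 pn(4) unfolding C_def x_def y_def by fastforce
  have R2: "T p * x = y * T p - C" using R20 pn(4) unfolding C_def x_def y_def by fastforce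
  have xy: "x*y = y*x" using tc pn unfolding x_def y_def by blast
  have yC: "y*C = C*y"
    unfolding C_def corr_def
  proof (intro comm_sum comm_mult)
    fix a f z
    show "y * \<phi> a = \<phi> a * y" using cent by simp
    show "y * peval \<phi> f (t (Suc p - 1)) = peval \<phi> f (t (Suc p - 1)) * y"
      by (rule peval_comm[OF cent]) (use xy in \<open>simp add: x_def\<close>)
    show "y * peval \<phi> f (t (Suc p)) = peval \<phi> f (t (Suc p)) * y"
      by (rule peval_comm[OF cent]) (simp add: y_def)
  qed
  note core = commZ_core[OF xy R1 R2 yC]
  define S where "S = red_exps n r"
  define sw where "sw = swap_exp p"
  define g where "g \<alpha> = \<phi> (c \<alpha>) * monom_t n t \<alpha>" for \<alpha>
  define Rm where "Rm \<alpha> = monom_t n t (\<alpha>(p:=0, p+1:=0))" for \<alpha>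
  have decomp: "monom_t n t \<alpha> = x ^ \<alpha> p * (y ^ \<alpha> (p+1) * Rm \<alpha>)" for \<alpha>
  proof -
    have tc': "\<forall>i\<in>set [1..<n+1]. \<forall>j\<in>set [1..<n+1]. t i * t j = t j * t i" using tc by auto
    have "monom_t n t \<alpha> = x ^ \<alpha> p * monom_t n t (\<alpha>(p:=0))"
      unfolding monom_t_def x_def using pn by (intro foldr_extract[OF _ _ tc']) auto
    also have "monom_t n t (\<alpha>(p:=0)) = y ^ \<alpha> (p+1) * Rm \<alpha>"
      unfolding monom_t_def y_def Rm_def using pn
      by (subst foldr_extract[OF _ _ tc', of "p+1"]) auto
    finally show ?thesis .
  qed
  have RmT: "T p * Rm \<alpha> = Rm \<alpha> * T p" for \<alpha>
    unfolding Rm_def monom_t_def by (rule foldr_commT) (auto intro: Tt)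
  have Rmsw: "Rm (sw \<alpha>) = Rm \<alpha>" for \<alpha>
    unfolding Rm_def sw_def swap_exp_def by (rule arg_cong[where f="monom_t n t"]) auto
  have swp: "sw \<alpha> p = \<alpha> (p+1)" "sw \<alpha> (p+1) = \<alpha> p" for \<alpha> unfolding sw_def swap_exp_def by auto
  have swsw: "sw (sw \<alpha>) = \<alpha>" for \<alpha> unfolding sw_def swap_exp_def by auto
  have swS: "sw \<alpha> \<in> S" if "\<alpha> \<in> S" for \<alpha>
    using that pn unfolding S_def red_exps_def sw_def swap_exp_def by auto
  have csw: "c (sw \<alpha>) = c \<alpha>" if "\<alpha> \<in> S" for \<alpha> using assms(7) that unfolding S_def sw_def by auto
  have gcent: "T p * (\<phi> a * z) = (\<phi> a * z) * T p" if "T p * z = z * T p" for a z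
    using that cent by (metis comm_mult)
  define Aeq where "Aeq = {\<alpha>\<in>S. \<alpha> p = \<alpha> (p+1)}"
  define Alt where "Alt = {\<alpha>\<in>S. \<alpha> p < \<alpha> (p+1)}"
  define Agt where "Agt = {\<alpha>\<in>S. \<alpha> (p+1) < \<alpha> p}"
  show ?thesis
  proof (cases "finite S")
    case False then show ?thesis unfolding elem_t_def S_def by simp
  next
    case fin: True
    have Sun: "S = Aeq \<union> Alt \<union> Agt" unfolding Aeq_def Alt_def Agt_def by auto
    have img: "sw ` Alt = Agt"
    proof
      show "sw ` Alt \<subseteq> Agt" unfolding Alt_def Agt_def using swS swp by auto
      show "Agt \<subseteq> sw ` Alt"
      proof
        fix \<alpha> assume a: "\<alpha> \<in> Agt"
        then have "sw \<alpha> \<in> Alt" unfolding Alt_def Agt_def using swS swp by auto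
        then show "\<alpha> \<in> sw ` Alt" using swsw by (metis image_eqI)
      qed
    qed
    have inj: "inj_on sw Alt" by (metis inj_onI swsw)
    have fA: "finite Aeq" "finite Alt" "finite Agt"
      unfolding Aeq_def Alt_def Agt_def using fin by auto
    have d1: "(Aeq \<union> Alt) \<inter> Agt = {}" "Aeq \<inter> Alt = {}"
      unfolding Aeq_def Alt_def Agt_def by auto
    have "sum g S = sum g (Aeq \<union> Alt \<union> Agt)" by (simp only: Sun[symmetric])
    also have "\<dots> = sum g (Aeq \<union> Alt) + sum g Agt"
      by (rule sum.union_disjoint) (use fA d1 in auto)
    also have "sum g (Aeq \<union> Alt) = sum g Aeq + sum g Alt"
      by (rule sum.union_disjoint) (use fA d1 in auto)
    also have "sum g Agt = sum (g \<circ> sw) Alt" unfolding img[symmetric] using inj by (rule sum.reindex)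
    finally have split: "sum g S = sum g Aeq + sum (\<lambda>\<alpha>. g \<alpha> + g (sw \<alpha>)) Alt"
      by (simp add: sum.distrib add.assoc)
    have "T p * sum g S = sum g S * T p"
      unfolding split
    proof (rule comm_add; rule comm_sum)
      fix \<alpha> assume "\<alpha> \<in> Aeq"
      then have e: "\<alpha> (p+1) = \<alpha> p" unfolding Aeq_def by auto
      have "T p * (x ^ \<alpha> p * y ^ \<alpha> p * Rm \<alpha>) = (x ^ \<alpha> p * y ^ \<alpha> p * Rm \<alpha>) * T p"
        using core(2) RmT by (metis comm_mult)
      then show "T p * g \<alpha> = g \<alpha> * T p"
        unfolding g_def decomp e by (intro gcent) (simp add: mult.assoc)
    next
      fix \<alpha> assume a: "\<alpha> \<in> Alt"
      then have "\<alpha> \<in> S" unfolding Alt_def by auto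
      then have "g \<alpha> + g (sw \<alpha>) = \<phi> (c \<alpha>) * ((x ^ \<alpha> p * y ^ \<alpha> (p+1) + x ^ \<alpha> (p+1) * y ^ \<alpha> p) * Rm \<alpha>)"
        unfolding g_def decomp swp Rmsw csw[OF \<open>\<alpha>\<in>S\<close>]
        by (simp add: distrib_left distrib_right mult.assoc)
      moreover have "T p * ((x ^ \<alpha> p * y ^ \<alpha> (p+1) + x ^ \<alpha> (p+1) * y ^ \<alpha> p) * Rm \<alpha>)
          = ((x ^ \<alpha> p * y ^ \<alpha> (p+1) + x ^ \<alpha> (p+1) * y ^ \<alpha> p) * Rm \<alpha>) * T p"
        using core(1) RmT by (metis comm_mult)
      ultimately show "T p * (g \<alpha> + g (sw \<alpha>)) = (g \<alpha> + g (sw \<alpha>)) * T p"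
        using gcent by metis
    qed
    then show ?thesis unfolding elem_t_def S_def g_def .
  qed
qed

end
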